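(* Let $\lambda,\mu\in\mathbb{C}$ and let $L=\widetilde{L_{\lambda,\mu}}^1$; for $j\in\mathbb{Z}$ let $\Delta_{j+\frac12}(L)$ be the space of $\frac12$-derivations of $L$ of degree $j+\frac12$. (1) If $\mu\in\frac12+\mathbb{Z}$ and $\lambda\notin\{-3,-1,1\}$, then $\Delta_{j+\frac12}(L)=0$ for all $j\in\mathbb{Z}$. (2) If $\mu\notin\frac12\mathbb{Z}$, or $\mu\in\mathbb{Z}$ and $\lambda\neq-1$, then $\Delta_{j+\frac12}(L)=0$ for $\lambda\neq1$, while for $\lambda=1$, $\Delta_{j+\frac12}(\widetilde{L_{1,\mu}}^1)$ consists exactly of the maps $\varphi$ for which there is $\alpha\in\mathbb{C}$ with $\varphi(L_n)=\alpha Y_{n+j+\frac12}$ and $\varphi(Y_{n+\frac12})=\alpha M_{n+j+1}$ for all $n\in\mathbb{Z}$, and $\varphi(M_n)=0$, $\varphi(C_L)=0$.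
   Context: For $\lambda,\mu\in\mathbb{C}$, $\widetilde{L_{\lambda,\mu}}^1$ is the complex Lie algebra with basis $\{L_n,M_n,Y_{n+\frac12},C_L\mid n\in\mathbb{Z}\}$, $C_L$ central, and nonzero brackets $[L_m,L_n]=(n-m)L_{m+n}+\frac{m^3-m}{12}\delta_{m+n,0}C_L$, $[L_m,M_n]=(n-\lambda m+2\mu)M_{m+n}$, $[L_m,Y_{n+\frac12}]=(n+\frac12-\frac{\lambda+1}{2}m+\mu)Y_{m+n+\frac12}$, $[Y_{m+\frac12},Y_{n+\frac12}]=(n-m)M_{m+n+1}$. It is $\frac12\mathbb{Z}$-graded by $W_0=\langle L_0,M_0,C_L\rangle$, $W_n=\langle L_n,M_n\rangle$ ($n\neq0$), $W_{n+\frac12}=\langle Y_{n+\frac12}\rangle$. A $\frac12$-derivation is a linear map $\varphi$ with $\varphi([x,y])=\frac12([\varphi(x),y]+[x,\varphi(y)])$; it has degree $g$ if $\varphi(W_h)\subseteq W_{g+h}$ for all $h\in\frac12\mathbb{Z}$. *)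

theory Defs
  imports Complex_Main
begin

text \<open>Basis of the Lie algebra: GL n = L_n, GM n = M_n, GY n = Y_{n+1/2}, GC = C_L.\<close>
datatype gen = GL int | GM int | GY int | GC

type_synonym vec = "gen \<Rightarrow> complex"

definition supp :: "vec \<Rightarrow> gen set" where
  "supp v = {g. v g \<noteq> 0}"

definition Vsp :: "vec set" where
  "Vsp = {v. finite (supp v)}"

definition vzero :: vec where "vzero = (\<lambda>_. 0)"
definition vadd :: "vec \<Rightarrow> vec \<Rightarrow> vec" where "vadd x y = (\<lambda>g. x g + y g)"
definition vsmul :: "complex \<Rightarrow> vec \<Rightarrow> vec" where "vsmul c x = (\<lambda>g. c * x g)"
definition e :: "gen \<Rightarrow> vec" where "e g = (\<lambda>h. if h = g then 1 else 0)"

fun brb :: "complex \<Rightarrow> complex \<Rightarrow> gen \<Rightarrow> gen \<Rightarrow> vec" where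
  "brb la mu (GL m) (GL n) =
     vadd (vsmul (of_int (n - m)) (e (GL (m + n))))
          (vsmul (if m + n = 0 then (of_int m ^ 3 - of_int m) / 12 else 0) (e GC))"
| "brb la mu (GL m) (GM n) = vsmul (of_int n - la * of_int m + 2 * mu) (e (GM (m + n)))"
| "brb la mu (GM n) (GL m) = vsmul (- (of_int n - la * of_int m + 2 * mu)) (e (GM (m + n)))"
| "brb la mu (GL m) (GY n) =
     vsmul (of_int n + 1/2 - (la + 1) / 2 * of_int m + mu) (e (GY (m + n)))"
| "brb la mu (GY n) (GL m) =
     vsmul (- (of_int n + 1/2 - (la + 1) / 2 * of_int m + mu)) (e (GY (m + n)))"
| "brb la mu (GY m) (GY n) = vsmul (of_int (n - m)) (e (GM (m + n + 1)))"
| "brb la mu _ _ = vzero"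

definition br :: "complex \<Rightarrow> complex \<Rightarrow> vec \<Rightarrow> vec \<Rightarrow> vec" where
  "br la mu x y = (\<lambda>g. \<Sum>a\<in>supp x. \<Sum>b\<in>supp y. x a * y b * brb la mu a b g)"

text \<open>Doubled degree: the basis element has degree \<open>gdeg g / 2\<close> in the 1/2 Z grading.\<close>
fun gdeg :: "gen \<Rightarrow> int" where
  "gdeg (GL n) = 2 * n"
| "gdeg (GM n) = 2 * n"
| "gdeg (GY n) = 2 * n + 1"
| "gdeg GC = 0"

definition Wc :: "int \<Rightarrow> vec set" where
  "Wc k = {v \<in> Vsp. \<forall>g \<in> supp v. gdeg g = k}"

definition is_linear :: "(vec \<Rightarrow> vec) \<Rightarrow> bool" where
  "is_linear \<phi> \<longleftrightarrow> (\<forall>v\<in>Vsp. \<phi> v \<in> Vsp)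
     \<and> (\<forall>x\<in>Vsp. \<forall>y\<in>Vsp. \<phi> (vadd x y) = vadd (\<phi> x) (\<phi> y))
     \<and> (\<forall>c. \<forall>x\<in>Vsp. \<phi> (vsmul c x) = vsmul c (\<phi> x))"

definition is_half_der :: "complex \<Rightarrow> complex \<Rightarrow> (vec \<Rightarrow> vec) \<Rightarrow> bool" where
  "is_half_der la mu \<phi> \<longleftrightarrow> is_linear \<phi> \<and>
     (\<forall>x\<in>Vsp. \<forall>y\<in>Vsp. \<phi> (br la mu x y) =
        vsmul (1/2) (vadd (br la mu (\<phi> x) y) (br la mu x (\<phi> y))))"

text \<open>Degree \<open>d/2\<close> (d doubled degree).\<close>
definition has_deg2 :: "int \<Rightarrow> (vec \<Rightarrow> vec) \<Rightarrow> bool" where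
  "has_deg2 d \<phi> \<longleftrightarrow> (\<forall>k. \<forall>v\<in>Wc k. \<phi> v \<in> Wc (k + d))"

definition Delta2 :: "complex \<Rightarrow> complex \<Rightarrow> int \<Rightarrow> (vec \<Rightarrow> vec) set" where
  "Delta2 la mu d = {\<phi>. is_half_der la mu \<phi> \<and> has_deg2 d \<phi>}"

end

theory Submission
  imports Defs
begin


lemma supp_e[simp]: "supp (e g) = {g}"
  by (auto simp: supp_def e_def)
lemma supp_vzero[simp]: "supp vzero = {}"
  by (auto simp: supp_def vzero_def)
lemma e_Vsp[simp]: "e g \<in> Vsp" by (simp add: Vsp_def)
lemma vzero_Vsp[simp]: "vzero \<in> Vsp" by (simp add: Vsp_def)
lemma supp_vadd: "supp (vadd x y) \<subseteq> supp x \<union> supp y" by (auto simp: supp_def vadd_def)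
lemma supp_vsmul: "supp (vsmul c x) \<subseteq> supp x" by (auto simp: supp_def vsmul_def)
lemma vadd_Vsp[simp]: "x \<in> Vsp \<Longrightarrow> y \<in> Vsp \<Longrightarrow> vadd x y \<in> Vsp"
  unfolding Vsp_def using supp_vadd by (metis finite_UnI finite_subset mem_Collect_eq)
lemma vsmul_Vsp[simp]: "x \<in> Vsp \<Longrightarrow> vsmul c x \<in> Vsp"
  unfolding Vsp_def using supp_vsmul by (metis finite_subset mem_Collect_eq)
lemma brb_Vsp[simp]: "brb la mu a b \<in> Vsp"
  by (cases "(la,mu,a,b)" rule: brb.cases) auto
lemma Vsp_fin: "x \<in> Vsp \<Longrightarrow> finite (supp x)" by (simp add: Vsp_def)

lemma br_super:
  assumes "finite A" "supp x \<subseteq> A" "finite B" "supp y \<subseteq> B"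
  shows "br la mu x y g = (\<Sum>a\<in>A. \<Sum>b\<in>B. x a * y b * brb la mu a b g)"
proof -
  have "br la mu x y g = (\<Sum>a\<in>supp x. \<Sum>b\<in>B. x a * y b * brb la mu a b g)"
    unfolding br_def
    apply (rule sum.cong[OF refl])
    apply (rule sum.mono_neutral_left[OF assms(3,4)])
    apply (auto simp: supp_def)
    done
  also have "... = (\<Sum>a\<in>A. \<Sum>b\<in>B. x a * y b * brb la mu a b g)"
    apply (rule sum.mono_neutral_left[OF assms(1,2)])
    apply (auto simp: supp_def)
    done
  finally show ?thesis .
qed

lemma br_vadd_left:
  assumes "x \<in> Vsp" "x' \<in> Vsp" "y \<in> Vsp"
  shows "br la mu (vadd x x') y = vadd (br la mu x y) (br la mu x' y)"
proof (rule ext)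
  fix g
  let ?A = "supp x \<union> supp x'"
  have f: "finite ?A" "finite (supp y)" using assms by (auto simp: Vsp_def)
  have s: "supp (vadd x x') \<subseteq> ?A" "supp x \<subseteq> ?A" "supp x' \<subseteq> ?A" using supp_vadd by auto
  show "br la mu (vadd x x') y g = vadd (br la mu x y) (br la mu x' y) g"
    unfolding vadd_def[of "br la mu x y"]
    by (simp add: br_super[OF f(1) s(1) f(2)] br_super[OF f(1) s(2) f(2)] br_super[OF f(1) s(3) f(2)])
       (simp add: vadd_def algebra_simps sum.distrib)
qed

lemma br_vadd_right:
  assumes "x \<in> Vsp" "y \<in> Vsp" "y' \<in> Vsp"
  shows "br la mu x (vadd y y') = vadd (br la mu x y) (br la mu x y')"
proof (rule ext)
  fix g
  let ?B = "supp y \<union> supp y'"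
  have f: "finite (supp x)" "finite ?B" using assms by (auto simp: Vsp_def)
  have s: "supp (vadd y y') \<subseteq> ?B" "supp y \<subseteq> ?B" "supp y' \<subseteq> ?B" using supp_vadd by auto
  show "br la mu x (vadd y y') g = vadd (br la mu x y) (br la mu x y') g"
    unfolding vadd_def[of "br la mu x y"]
    by (simp add: br_super[OF f(1) _ f(2) s(1)] br_super[OF f(1) _ f(2) s(2)] br_super[OF f(1) _ f(2) s(3)])
       (simp add: vadd_def algebra_simps sum.distrib)
qed

lemma br_vsmul_left:
  assumes "x \<in> Vsp" "y \<in> Vsp"
  shows "br la mu (vsmul c x) y = vsmul c (br la mu x y)"
proof (rule ext)
  fix g
  have f: "finite (supp x)" "finite (supp y)" using assms by (auto simp: Vsp_def)
  have s: "supp (vsmul c x) \<subseteq> supp x" using supp_vsmul by auto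
  show "br la mu (vsmul c x) y g = vsmul c (br la mu x y) g"
    unfolding vsmul_def[of c "br la mu x y"]
    by (simp add: br_super[OF f(1) s f(2)] br_super[OF f(1) order_refl f(2)])
       (simp add: vsmul_def algebra_simps sum_distrib_left)
qed

lemma br_vsmul_right:
  assumes "x \<in> Vsp" "y \<in> Vsp"
  shows "br la mu x (vsmul c y) = vsmul c (br la mu x y)"
proof (rule ext)
  fix g
  have f: "finite (supp x)" "finite (supp y)" using assms by (auto simp: Vsp_def)
  have s: "supp (vsmul c y) \<subseteq> supp y" using supp_vsmul by auto
  show "br la mu x (vsmul c y) g = vsmul c (br la mu x y) g"
    unfolding vsmul_def[of c "br la mu x y"]
    by (simp add: br_super[OF f(1) order_refl f(2) s] br_super[OF f(1) order_refl f(2) order_refl])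
       (simp add: vsmul_def algebra_simps sum_distrib_left)
qed

lemma br_e_e[simp]: "br la mu (e a) (e b) = brb la mu a b"
  by (rule ext) (subst br_super[of "{a}" _ "{b}"], auto simp: e_def supp_def)

lemma br_vzero_left[simp]: "br la mu vzero y = vzero"
  by (rule ext) (simp add: br_def vzero_def)
lemma br_vzero_right[simp]: "br la mu x vzero = vzero"
  by (rule ext) (simp add: br_def vzero_def)

lemma e_apply[simp]: "e g h = (if h = g then 1 else 0)" by (simp add: e_def)
lemma vadd_apply[simp]: "vadd x y g = x g + y g" by (simp add: vadd_def)
lemma vsmul_apply[simp]: "vsmul c x g = c * x g" by (simp add: vsmul_def)
lemma vzero_apply[simp]: "vzero g = 0" by (simp add: vzero_def)

definition vsum :: "('a \<Rightarrow> vec) \<Rightarrow> 'a set \<Rightarrow> vec" where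
  "vsum f S = (\<lambda>g. \<Sum>s\<in>S. f s g)"

lemma vsum_empty[simp]: "vsum f {} = vzero" by (simp add: vsum_def vzero_def)
lemma vsum_insert: "finite S \<Longrightarrow> s \<notin> S \<Longrightarrow> vsum f (insert s S) = vadd (f s) (vsum f S)"
  by (simp add: vsum_def vadd_def)
lemma vsum_Vsp: "finite S \<Longrightarrow> (\<forall>s\<in>S. f s \<in> Vsp) \<Longrightarrow> vsum f S \<in> Vsp"
  by (induction S rule: finite_induct) (auto simp: vsum_insert)

lemma lin_zero: "is_linear \<phi> \<Longrightarrow> \<phi> vzero = vzero"
proof -
  assume l: "is_linear \<phi>"
  have "\<phi> (vsmul 0 vzero) = vsmul 0 (\<phi> vzero)" using l by (simp add: is_linear_def)
  moreover have "vsmul 0 vzero = vzero" "vsmul 0 (\<phi> vzero) = vzero" by (auto simp: vsmul_def vzero_def)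
  ultimately show ?thesis by simp
qed

lemma lin_vadd: "is_linear \<phi> \<Longrightarrow> x \<in> Vsp \<Longrightarrow> y \<in> Vsp \<Longrightarrow> \<phi> (vadd x y) = vadd (\<phi> x) (\<phi> y)"
  by (simp add: is_linear_def)
lemma lin_vsmul: "is_linear \<phi> \<Longrightarrow> x \<in> Vsp \<Longrightarrow> \<phi> (vsmul c x) = vsmul c (\<phi> x)"
  by (simp add: is_linear_def)
lemma lin_Vsp: "is_linear \<phi> \<Longrightarrow> x \<in> Vsp \<Longrightarrow> \<phi> x \<in> Vsp"
  by (simp add: is_linear_def)

lemma lin_vsum: assumes "is_linear \<phi>" shows "finite S \<Longrightarrow> (\<forall>s\<in>S. f s \<in> Vsp) \<Longrightarrow>
   \<phi> (vsum f S) = vsum (\<lambda>s. \<phi> (f s)) S"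
  by (induction S rule: finite_induct) (auto simp: vsum_insert lin_zero[OF assms] lin_vadd[OF assms] vsum_Vsp)

lemma br_vsum_left: "finite S \<Longrightarrow> (\<forall>s\<in>S. f s \<in> Vsp) \<Longrightarrow> y \<in> Vsp \<Longrightarrow>
   br la mu (vsum f S) y = vsum (\<lambda>s. br la mu (f s) y) S"
  by (induction S rule: finite_induct) (auto simp: vsum_insert br_vadd_left vsum_Vsp)
lemma br_vsum_right: "finite S \<Longrightarrow> (\<forall>s\<in>S. f s \<in> Vsp) \<Longrightarrow> x \<in> Vsp \<Longrightarrow>
   br la mu x (vsum f S) = vsum (\<lambda>s. br la mu x (f s)) S"
  by (induction S rule: finite_induct) (auto simp: vsum_insert br_vadd_right vsum_Vsp)

lemma decomp: "v \<in> Vsp \<Longrightarrow> v = vsum (\<lambda>g. vsmul (v g) (e g)) (supp v)"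
  by (rule ext) (auto simp: vsum_def vsmul_def e_def supp_def Vsp_def if_distrib sum.delta cong: if_cong)

lemma lin_decomp: assumes "is_linear \<phi>" "v \<in> Vsp"
  shows "\<phi> v = vsum (\<lambda>g. vsmul (v g) (\<phi> (e g))) (supp v)"
proof -
  have "\<phi> v = \<phi> (vsum (\<lambda>g. vsmul (v g) (e g)) (supp v))" using decomp[OF assms(2)] by simp
  also have "\<dots> = vsum (\<lambda>g. \<phi> (vsmul (v g) (e g))) (supp v)"
    by (rule lin_vsum[OF assms(1)]) (use assms(2) Vsp_fin in auto)
  also have "\<dots> = vsum (\<lambda>g. vsmul (v g) (\<phi> (e g))) (supp v)"
    using lin_vsmul[OF assms(1) e_Vsp] by simp
  finally show ?thesis .
qed



lemma e_Wc: "e g \<in> Wc (gdeg g)" by (simp add: Wc_def)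

lemma deg_zero:
  assumes "\<phi> \<in> Delta2 la mu D" "gdeg h \<noteq> gdeg g + D"
  shows "\<phi> (e g) h = 0"
proof -
  have "\<phi> (e g) \<in> Wc (gdeg g + D)" using assms(1) e_Wc by (auto simp: Delta2_def has_deg2_def)
  thus ?thesis using assms(2) by (auto simp: Wc_def supp_def)
qed

lemma D_lin: "\<phi> \<in> Delta2 la mu D \<Longrightarrow> is_linear \<phi>"
  by (simp add: Delta2_def is_half_der_def)

lemma D_basis: "\<phi> \<in> Delta2 la mu D \<Longrightarrow>
  \<phi> (brb la mu x y) = vsmul (1/2) (vadd (br la mu (\<phi> (e x)) (e y)) (br la mu (e x) (\<phi> (e y))))"
proof -
  assume "\<phi> \<in> Delta2 la mu D"
  hence "is_half_der la mu \<phi>" by (simp add: Delta2_def)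
  hence "\<phi> (br la mu (e x) (e y)) = vsmul (1/2) (vadd (br la mu (\<phi> (e x)) (e y)) (br la mu (e x) (\<phi> (e y))))"
    unfolding is_half_der_def using e_Vsp by blast
  thus ?thesis by simp
qed

lemma forward:
  assumes P: "\<phi> \<in> Delta2 la mu (2*j+1)"
    and H: "\<And>k::int. \<not> (la = -3 \<and> mu = - of_int k - 1/2)"
  shows "\<exists>\<alpha>. (\<forall>n. \<phi> (e (GL n)) = vsmul \<alpha> (e (GY (n + j)))
                 \<and> \<phi> (e (GY n)) = vsmul \<alpha> (e (GM (n + j + 1)))
                 \<and> \<phi> (e (GM n)) = vzero) \<and> \<phi> (e GC) = vzero \<and> \<alpha> * (1 - la) = 0"
proof -
  have lin: "is_linear \<phi>" using P by (rule D_lin)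
  define a where "a n = \<phi> (e (GL n)) (GY (n+j))" for n
  define b where "b n = \<phi> (e (GM n)) (GY (n+j))" for n
  define c where "c n = \<phi> (e (GY n)) (GL (n+j+1))" for n
  define d where "d n = \<phi> (e (GY n)) (GM (n+j+1))" for n
  define f where "f n = \<phi> (e (GY n)) GC" for n
  define \<gamma> where "\<gamma> = \<phi> (e GC) (GY j)"
  have z: "\<And>g h. gdeg h \<noteq> gdeg g + (2*j+1) \<Longrightarrow> \<phi> (e g) h = 0" using deg_zero[OF P] by blast
  have zL: "h \<noteq> GY (n+j) \<Longrightarrow> \<phi> (e (GL n)) h = 0" for n h
    by (cases h; rule z; simp; presburger)
  have zM: "h \<noteq> GY (n+j) \<Longrightarrow> \<phi> (e (GM n)) h = 0" for n h
    by (cases h; rule z; simp; presburger)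
  have zC: "h \<noteq> GY j \<Longrightarrow> \<phi> (e GC) h = 0" for h
    by (cases h; rule z; simp; presburger)
  have zY: "h \<noteq> GL (n+j+1) \<Longrightarrow> h \<noteq> GM (n+j+1) \<Longrightarrow> h \<noteq> GC \<Longrightarrow> \<phi> (e (GY n)) h = 0" for n h
    by (cases h; rule z; simp; presburger)
  have SL: "\<phi> (e (GL n)) = vsmul (a n) (e (GY (n+j)))" for n
    by (rule ext) (auto simp: a_def zL)
  have SM: "\<phi> (e (GM n)) = vsmul (b n) (e (GY (n+j)))" for n
    by (rule ext) (auto simp: b_def zM)
  have SC: "\<phi> (e GC) = vsmul \<gamma> (e (GY j))"
    by (rule ext) (auto simp: \<gamma>_def zC)
  have SY: "\<phi> (e (GY n)) = vadd (vsmul (c n) (e (GL (n+j+1))))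
              (vadd (vsmul (d n) (e (GM (n+j+1)))) (vsmul (f n) (e GC)))" for n
    by (rule ext) (auto simp: c_def d_def f_def zY)
  note simps = SL SM SC SY lin_vadd[OF lin] lin_vsmul[OF lin] lin_zero[OF lin]
     br_vadd_left br_vadd_right br_vsmul_left br_vsmul_right
  have DL: "2 * (of_int n + 1/2 - (la+1)/2 * of_int m + mu) * c (m+n) = c n * of_int (n+j+1-m)" for m n
  proof -
    have "\<phi> (brb la mu (GL m) (GY n)) (GL (m+n+j+1)) = vsmul (1/2) (vadd (br la mu (\<phi> (e (GL m))) (e (GY n))) (br la mu (e (GL m)) (\<phi> (e (GY n))))) (GL (m+n+j+1))"
      by (rule fun_cong[OF D_basis[OF P]])
    thus ?thesis by (simp add: simps) (simp add: algebra_simps)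
  qed
  have DM: "2 * (of_int n + 1/2 - (la+1)/2 * of_int m + mu) * d (m+n) = a m * of_int (n-m-j) + d n * (of_int (n+j+1) - la * of_int m + 2*mu)" for m n
  proof -
    have "\<phi> (brb la mu (GL m) (GY n)) (GM (m+n+j+1)) = vsmul (1/2) (vadd (br la mu (\<phi> (e (GL m))) (e (GY n))) (br la mu (e (GL m)) (\<phi> (e (GY n))))) (GM (m+n+j+1))"
      by (rule fun_cong[OF D_basis[OF P]])
    thus ?thesis by (simp add: simps) (simp add: algebra_simps)
  qed
  have DC0: "(of_int n + 1/2 + mu) * f n = 0" for n
  proof -
    have "\<phi> (brb la mu (GL 0) (GY n)) GC = vsmul (1/2) (vadd (br la mu (\<phi> (e (GL 0))) (e (GY n))) (br la mu (e (GL 0)) (\<phi> (e (GY n))))) GC"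
      by (rule fun_cong[OF D_basis[OF P]])
    thus ?thesis by (simp add: simps split: if_splits; auto simp: algebra_simps)
  qed
  have DC1: "(of_int n + 1/2 - (la+1)/2 + mu) * f (1+n) = 0" for n
  proof -
    have "\<phi> (brb la mu (GL 1) (GY n)) GC = vsmul (1/2) (vadd (br la mu (\<phi> (e (GL 1))) (e (GY n))) (br la mu (e (GL 1)) (\<phi> (e (GY n))))) GC"
      by (rule fun_cong[OF D_basis[OF P]])
    thus ?thesis by (simp add: simps split: if_splits; auto simp: algebra_simps)
  qed
  have E: "0 = b m * of_int (n-m-j) - c n * (of_int m - la * of_int (n+j+1) + 2*mu)" for m n
  proof -
    have "\<phi> (brb la mu (GM m) (GY n)) (GM (m+n+j+1)) = vsmul (1/2) (vadd (br la mu (\<phi> (e (GM m))) (e (GY n))) (br la mu (e (GM m)) (\<phi> (e (GY n))))) (GM (m+n+j+1))"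
      by (rule fun_cong[OF D_basis[OF P]])
    thus ?thesis by (simp add: simps) (simp add: algebra_simps)
  qed
  have EC: "0 = \<gamma> * of_int (n-j)" for n
  proof -
    have "\<phi> (brb la mu GC (GY n)) (GM (n+j+1)) = vsmul (1/2) (vadd (br la mu (\<phi> (e GC)) (e (GY n))) (br la mu (e GC) (\<phi> (e (GY n))))) (GM (n+j+1))"
      by (rule fun_cong[OF D_basis[OF P]])
    thus ?thesis by (simp add: simps)
  qed
  have A: "2 * of_int (n-m) * a (m+n) = - a m * (of_int (m+j) + 1/2 - (la+1)/2 * of_int n + mu) + a n * (of_int (n+j) + 1/2 - (la+1)/2 * of_int m + mu)" if "m+n \<noteq> 0" for m n
  proof -
    have "\<phi> (brb la mu (GL m) (GL n)) (GY (m+n+j)) = vsmul (1/2) (vadd (br la mu (\<phi> (e (GL m))) (e (GL n))) (br la mu (e (GL m)) (\<phi> (e (GL n))))) (GY (m+n+j))"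
      by (rule fun_cong[OF D_basis[OF P]])
    thus ?thesis using that by (simp add: simps) (simp add: algebra_simps)
  qed
  have g0: "\<gamma> = 0" using EC[of "j+1"] by simp
  have cL0: "c k * (of_int k + 2*mu - of_int j) = 0" for k
  proof -
    have "2*(of_int k+1/2+mu)*c k = c k * (of_int k + of_int j + 1)" using DL[where m=0 and n=k] by simp
    moreover have "c k * (of_int k + 2*mu - of_int j) = 2*(of_int k+1/2+mu)*c k - c k * (of_int k + of_int j + 1)"
      by (simp add: algebra_simps)
    ultimately show ?thesis by simp
  qed
  have c0: "c n = 0" for n
  proof (rule ccontr)
    assume cn: "c n \<noteq> 0"
    have x0: "of_int n + 2*mu - of_int j = 0" using cL0[of n] cn by simp
    have "2*mu = (of_int n + 2*mu - of_int j) + (of_int j - of_int n)" by simp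
    hence mu2: "2*mu = of_int j - of_int n" using x0 by simp
    have "c (n+1) * 1 = 0" using cL0[of "n+1"] by (simp add: mu2)
    hence c1: "c (1+n) = 0" by (simp add: add.commute)
    have "c (n+2) * 2 = 0" using cL0[of "n+2"] by (simp add: mu2)
    hence c2: "c (2+n) = 0" by (simp add: add.commute)
    have "c n * of_int (n+j) = 0" using DL[where m=1 and n=n] c1 by simp
    hence "(of_int (n+j)::complex) = 0" using cn by (metis mult_eq_0_iff)
    hence e1: "n + j = 0" using of_int_eq_0_iff by blast
    have "c n * of_int (n+j-1) = 0" using DL[where m=2 and n=n] c2 by simp
    hence "(of_int (n+j-1)::complex) = 0" using cn by (metis mult_eq_0_iff)
    hence "n + j - 1 = 0" using of_int_eq_0_iff by blast
    with e1 show False by simp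
  qed
  have b0: "b m = 0" for m
    using E[where m=m and n="m+j+1"] c0 by simp
  have f0: "f k = 0" for k
  proof (rule ccontr)
    assume fk: "f k \<noteq> 0"
    have e1: "of_int k + 1/2 + mu = 0" using DC0[of k] fk by simp
    have e2: "of_int (k-1) + 1/2 - (la+1)/2 + mu = 0" using DC1[of "k-1"] fk by simp
    have id: "1 + (la+1)/2 = (of_int k + 1/2 + mu) - (of_int (k-1) + 1/2 - (la+1)/2 + mu)"
      by (simp add: algebra_simps)
    have "1 + (la+1)/2 = 0" using id unfolding e1 e2 by simp
    hence "la + 3 = 0" by (simp add: field_simps)
    hence "la = -3" by (metis add.commute add_eq_0_iff)
    moreover have "mu = - of_int k - 1/2"
    proof -
      have id2: "mu = (of_int k + 1/2 + mu) - of_int k - 1/2" by simp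
      show ?thesis using id2 unfolding e1 by simp
    qed
    ultimately show False using H[of k] by simp
  qed
  define \<alpha> where "\<alpha> = a 0"
  have dn: "d n = \<alpha>" if "n \<noteq> j" for n
  proof -
    have q: "2*(of_int n+1/2+mu)*d n = a 0 * of_int (n-j) + d n * (of_int n + of_int j + 1 + 2*mu)"
      using DM[where m=0 and n=n] by simp
    have "(d n - a 0) * of_int (n-j) = 2*(of_int n+1/2+mu)*d n - (a 0 * of_int (n-j) + d n * (of_int n + of_int j + 1 + 2*mu))"
      by (simp add: algebra_simps)
    hence "(d n - a 0) * of_int (n-j) = 0" using q by simp
    thus ?thesis using that by (simp add: \<alpha>_def)
  qed
  have am: "a m = \<alpha>" for m
  proof -
    define N where "N = 2*\<bar>m\<bar> + 2*\<bar>j\<bar> + 1"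
    have N1: "N \<noteq> j" "m + N \<noteq> j" "N - m - j \<noteq> 0" unfolding N_def by auto
    have q: "2 * (of_int N + 1/2 - (la+1)/2 * of_int m + mu) * \<alpha> = a m * of_int (N-m-j) + \<alpha> * (of_int (N+j+1) - la * of_int m + 2*mu)"
      using DM[where m=m and n=N] dn[OF N1(1)] dn[OF N1(2)] by simp
    have "(a m - \<alpha>) * of_int (N-m-j) = a m * of_int (N-m-j) + \<alpha> * (of_int (N+j+1) - la * of_int m + 2*mu) - 2 * (of_int N + 1/2 - (la+1)/2 * of_int m + mu) * \<alpha>"
      by (simp add: algebra_simps)
    hence "(a m - \<alpha>) * of_int (N-m-j) = 0" using q by simp
    moreover have "(of_int (N-m-j)::complex) \<noteq> 0" using N1(3) of_int_eq_0_iff by blast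
    ultimately have "a m - \<alpha> = 0" by (metis mult_eq_0_iff)
    thus ?thesis by simp
  qed
  have dj: "d j = \<alpha>"
  proof -
    have q1: "2 * (of_int j + 1/2 - (la+1)/2 + mu) * \<alpha> = \<alpha> * of_int (-1) + d j * (of_int (j+j+1) - la + 2*mu)"
      using DM[where m=1 and n=j] dn[of "1+j"] am[of 1] by simp
    have q2: "2 * (of_int (j-1) + 1/2 - (la+1)/2 + mu) * d j = \<alpha> * of_int (-2) + \<alpha> * (of_int (j-1+j+1) - la + 2*mu)"
      using DM[where m=1 and n="j-1"] dn[of "j-1"] am[of 1] by simp
    have r1: "(d j - \<alpha>) * (2*of_int j + 1 - la + 2*mu) = \<alpha> * of_int (-1) + d j * (of_int (j+j+1) - la + 2*mu) - 2 * (of_int j + 1/2 - (la+1)/2 + mu) * \<alpha>"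
      by (simp add: algebra_simps)
    have r2: "(d j - \<alpha>) * (2*of_int j - 2 - la + 2*mu) = 2 * (of_int (j-1) + 1/2 - (la+1)/2 + mu) * d j - (\<alpha> * of_int (-2) + \<alpha> * (of_int (j-1+j+1) - la + 2*mu))"
      by (simp add: algebra_simps)
    show ?thesis
    proof (rule ccontr)
      assume ne: "d j \<noteq> \<alpha>"
      have "2*of_int j + 1 - la + 2*mu = 0" using r1 q1 ne by simp
      moreover have "2*of_int j - 2 - la + 2*mu = 0" using r2 q2 ne by simp
      ultimately have "(3::complex) = 0" by (simp add: algebra_simps)
      thus False by simp
    qed
  qed
  have fin: "\<alpha> * (1 - la) = 0"
  proof -
    have q: "2 * \<alpha> = - \<alpha> * (of_int j + 1/2 - (la+1)/2 + mu) + \<alpha> * (of_int (1+j) + 1/2 + mu)"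
      using A[where m=0 and n=1] am[of 0] am[of 1] by simp
    have "\<alpha> * (1 - la) = 2 * (2 * \<alpha> - (- \<alpha> * (of_int j + 1/2 - (la+1)/2 + mu) + \<alpha> * (of_int (1+j) + 1/2 + mu)))"
      by (simp add: field_simps)
    thus ?thesis using q by simp
  qed
  have dall: "d n = \<alpha>" for n using dn dj by (cases "n = j") auto
  show ?thesis
  proof (intro exI conjI allI)
    fix n
    show "\<phi> (e (GL n)) = vsmul \<alpha> (e (GY (n + j)))" using SL am by simp
    show "\<phi> (e (GY n)) = vsmul \<alpha> (e (GM (n + j + 1)))" using SY[of n] c0 f0 dall by (auto intro!: ext)
    show "\<phi> (e (GM n)) = vzero" using SM[of n] b0 by (auto intro!: ext)
  next
    show "\<phi> (e GC) = vzero" using SC g0 by (auto intro!: ext)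
    show "\<alpha> * (1 - la) = 0" by (rule fin)
  qed
qed



lemma vsum_apply[simp]: "vsum f S g = (\<Sum>s\<in>S. f s g)" by (simp add: vsum_def)

lemma basis_half_der:
  assumes lin: "is_linear \<phi>"
    and B: "\<And>a b. \<phi> (brb la mu a b) = vsmul (1/2) (vadd (br la mu (\<phi> (e a)) (e b)) (br la mu (e a) (\<phi> (e b))))"
  shows "is_half_der la mu \<phi>"
  unfolding is_half_der_def
proof (intro conjI lin ballI)
  fix x y assume x: "x \<in> Vsp" and y: "y \<in> Vsp"
  let ?X = "supp x" and ?Y = "supp y"
  have fX: "finite ?X" and fY: "finite ?Y" using x y by (auto simp: Vsp_def)
  have eb: "br la mu x y = vsum (\<lambda>a. vsmul (x a) (vsum (\<lambda>b. vsmul (y b) (brb la mu a b)) ?Y)) ?X"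
    by (rule ext) (simp add: br_def sum_distrib_left mult.assoc)
  have inner: "vsum (\<lambda>b. vsmul (y b) (brb la mu a b)) ?Y \<in> Vsp" for a
    using fY by (auto intro!: vsum_Vsp)
  have L: "\<phi> (br la mu x y) = vsum (\<lambda>a. vsmul (x a) (vsum (\<lambda>b. vsmul (y b) (\<phi> (brb la mu a b))) ?Y)) ?X"
    unfolding eb
    apply (subst lin_vsum[OF lin fX])
     apply (use inner in simp)
    apply (simp add: lin_vsmul[OF lin] inner lin_vsum[OF lin fY])
    done
  have dx: "\<phi> x = vsum (\<lambda>a. vsmul (x a) (\<phi> (e a))) ?X" by (rule lin_decomp[OF lin x])
  have dy: "\<phi> y = vsum (\<lambda>b. vsmul (y b) (\<phi> (e b))) ?Y" by (rule lin_decomp[OF lin y])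
  have ex: "x = vsum (\<lambda>a. vsmul (x a) (e a)) ?X" by (rule decomp[OF x])
  have ey: "y = vsum (\<lambda>b. vsmul (y b) (e b)) ?Y" by (rule decomp[OF y])
  have pe: "\<phi> (e a) \<in> Vsp" for a using lin_Vsp[OF lin e_Vsp] .
  have R1: "br la mu (\<phi> x) y = vsum (\<lambda>a. vsmul (x a) (vsum (\<lambda>b. vsmul (y b) (br la mu (\<phi> (e a)) (e b))) ?Y)) ?X"
  proof -
    have "br la mu (\<phi> x) y = vsum (\<lambda>a. br la mu (vsmul (x a) (\<phi> (e a))) y) ?X"
      unfolding dx by (rule br_vsum_left[OF fX _ y]) (simp add: pe)
    also have "\<dots> = vsum (\<lambda>a. vsmul (x a) (br la mu (\<phi> (e a)) y)) ?X"
      by (simp add: br_vsmul_left pe y)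
    also have "\<dots> = vsum (\<lambda>a. vsmul (x a) (vsum (\<lambda>b. vsmul (y b) (br la mu (\<phi> (e a)) (e b))) ?Y)) ?X"
    proof -
      have "br la mu (\<phi> (e a)) y = vsum (\<lambda>b. vsmul (y b) (br la mu (\<phi> (e a)) (e b))) ?Y" for a
        apply (subst ey)
        apply (subst br_vsum_right[OF fY _ pe], simp)
        apply (simp add: br_vsmul_right pe)
        done
      thus ?thesis by simp
    qed
    finally show ?thesis .
  qed
  have R2: "br la mu x (\<phi> y) = vsum (\<lambda>a. vsmul (x a) (vsum (\<lambda>b. vsmul (y b) (br la mu (e a) (\<phi> (e b)))) ?Y)) ?X"
  proof -
    have py: "\<phi> y \<in> Vsp" using lin_Vsp[OF lin y] .
    have "br la mu x (\<phi> y) = vsum (\<lambda>a. br la mu (vsmul (x a) (e a)) (\<phi> y)) ?X"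
      by (subst ex, rule br_vsum_left[OF fX _ py]) simp
    also have "\<dots> = vsum (\<lambda>a. vsmul (x a) (br la mu (e a) (\<phi> y))) ?X"
      by (simp add: br_vsmul_left py)
    also have "\<dots> = vsum (\<lambda>a. vsmul (x a) (vsum (\<lambda>b. vsmul (y b) (br la mu (e a) (\<phi> (e b)))) ?Y)) ?X"
    proof -
      have "br la mu (e a) (\<phi> y) = vsum (\<lambda>b. vsmul (y b) (br la mu (e a) (\<phi> (e b)))) ?Y" for a
        apply (subst dy)
        apply (subst br_vsum_right[OF fY _ e_Vsp], simp add: pe)
        apply (simp add: br_vsmul_right pe)
        done
      thus ?thesis by simp
    qed
    finally show ?thesis .
  qed
  show "\<phi> (br la mu x y) = vsmul (1 / 2) (vadd (br la mu (\<phi> x) y) (br la mu x (\<phi> y)))"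
    unfolding L R1 R2 B
    by (rule ext) (simp add: sum_distrib_left sum.distrib algebra_simps)
qed

lemma backward_basis:
  assumes lin: "is_linear \<phi>"
    and S: "\<forall>n. \<phi> (e (GL n)) = vsmul \<alpha> (e (GY (n + j)))
                 \<and> \<phi> (e (GY n)) = vsmul \<alpha> (e (GM (n + j + 1)))
                 \<and> \<phi> (e (GM n)) = vzero" "\<phi> (e GC) = vzero"
  shows "\<phi> (brb 1 mu a b) = vsmul (1/2) (vadd (br 1 mu (\<phi> (e a)) (e b)) (br 1 mu (e a) (\<phi> (e b))))"
proof -
  note simps = S lin_vadd[OF lin] lin_vsmul[OF lin] lin_zero[OF lin]
     br_vadd_left br_vadd_right br_vsmul_left br_vsmul_right
  show ?thesis
    apply (cases a; cases b; rule ext)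
    apply (simp_all add: simps)
    apply (simp_all add: algebra_simps)
    done
qed

lemma Wc_vzero[simp]: "vzero \<in> Wc k" by (simp add: Wc_def)
lemma Wc_vsmul: "x \<in> Wc k \<Longrightarrow> vsmul c x \<in> Wc k"
  unfolding Wc_def using supp_vsmul by auto
lemma Wc_vsum:
  assumes "finite S" "\<forall>s\<in>S. f s \<in> Wc k"
  shows "vsum f S \<in> Wc k"
proof -
  have "vsum f S \<in> Vsp" using assms by (intro vsum_Vsp) (auto simp: Wc_def)
  moreover have "gdeg g = k" if "g \<in> supp (vsum f S)" for g
  proof -
    have "(\<Sum>s\<in>S. f s g) \<noteq> 0" using that by (simp add: supp_def)
    then obtain s where "s \<in> S" "f s g \<noteq> 0" by (meson sum.neutral)
    thus ?thesis using assms(2) by (auto simp: Wc_def supp_def)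
  qed
  ultimately show ?thesis by (auto simp: Wc_def)
qed

lemma backward:
  assumes lin: "is_linear \<phi>"
    and S: "\<forall>n. \<phi> (e (GL n)) = vsmul \<alpha> (e (GY (n + j)))
                 \<and> \<phi> (e (GY n)) = vsmul \<alpha> (e (GM (n + j + 1)))
                 \<and> \<phi> (e (GM n)) = vzero" "\<phi> (e GC) = vzero"
  shows "\<phi> \<in> Delta2 1 mu (2*j+1)"
  unfolding Delta2_def
proof (intro CollectI conjI)
  show "is_half_der 1 mu \<phi>" by (rule basis_half_der[OF lin backward_basis[OF lin S]])
  have eg: "\<phi> (e g) \<in> Wc (gdeg g + (2*j+1))" for g
  proof (cases g)
    case (GL n)
    have "vsmul \<alpha> (e (GY (n+j))) \<in> Wc (gdeg (GY (n+j)))" by (rule Wc_vsmul[OF e_Wc])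
    thus ?thesis using GL S by (simp add: algebra_simps)
  next
    case (GY n)
    have "vsmul \<alpha> (e (GM (n+j+1))) \<in> Wc (gdeg (GM (n+j+1)))" by (rule Wc_vsmul[OF e_Wc])
    thus ?thesis using GY S by (simp add: algebra_simps)
  qed (use S in auto)
  show "has_deg2 (2*j+1) \<phi>"
    unfolding has_deg2_def
  proof (intro allI ballI)
    fix k v assume v: "v \<in> Wc k"
    hence vV: "v \<in> Vsp" and dg: "\<forall>g\<in>supp v. gdeg g = k" by (auto simp: Wc_def)
    show "\<phi> v \<in> Wc (k + (2*j+1))"
      unfolding lin_decomp[OF lin vV]
      by (rule Wc_vsum) (use vV Vsp_fin dg eg Wc_vsmul in auto)
  qed
qed

lemma zero_all:
  assumes lin: "is_linear \<phi>" and z: "\<And>g. \<phi> (e g) = vzero"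
  shows "\<forall>v\<in>Vsp. \<phi> v = vzero"
proof
  fix v assume "v \<in> Vsp"
  thus "\<phi> v = vzero" unfolding lin_decomp[OF lin \<open>v \<in> Vsp\<close>] z
    by (auto intro!: ext)
qed

lemma forward_zero:
  assumes P: "\<phi> \<in> Delta2 la mu (2*j+1)"
    and H: "\<And>k::int. \<not> (la = -3 \<and> mu = - of_int k - 1/2)"
    and l1: "la \<noteq> 1"
  shows "\<forall>v\<in>Vsp. \<phi> v = vzero"
proof -
  obtain \<alpha> where A: "\<forall>n. \<phi> (e (GL n)) = vsmul \<alpha> (e (GY (n + j)))
                 \<and> \<phi> (e (GY n)) = vsmul \<alpha> (e (GM (n + j + 1)))
                 \<and> \<phi> (e (GM n)) = vzero" "\<phi> (e GC) = vzero" "\<alpha> * (1 - la) = 0"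
    using forward[OF P H] by blast
  have "\<alpha> = 0" using A(3) l1 by simp
  hence z: "\<phi> (e g) = vzero" for g using A(1,2)
    by (cases g) (auto intro!: ext)
  show ?thesis by (rule zero_all[OF D_lin[OF P] z])
qed



lemma H2:
  fixes la mu :: complex and k :: int
  assumes "(\<not> (\<exists>k::int. 2 * mu = of_int k)) \<or> ((\<exists>k::int. mu = of_int k) \<and> la \<noteq> -1)"
  shows "\<not> (la = -3 \<and> mu = - of_int k - 1/2)"
proof
  assume h: "la = -3 \<and> mu = - of_int k - 1/2"
  hence "2 * mu = 2 * (- of_int k - 1/2)" by simp
  also have "\<dots> = of_int (-2*k-1)" by simp
  finally have m2: "2 * mu = of_int (-2*k-1)" .
  from assms show False
  proof
    assume "\<not> (\<exists>k::int. 2 * mu = of_int k)" thus False using m2 by blast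
  next
    assume "(\<exists>k::int. mu = of_int k) \<and> la \<noteq> -1"
    then obtain k' where "mu = of_int k'" by blast
    hence "(of_int (2*k') :: complex) = of_int (-2*k-1)" using m2 by simp
    hence "2*k' = -2*k-1" by (simp only: of_int_eq_iff)
    thus False by presburger
  qed
qed

theorem mainTheorem6:
  fixes la mu :: complex and j :: int
  shows
   "((\<exists>k::int. mu = of_int k + 1/2) \<and> la \<notin> {-3, -1, 1} \<longrightarrow>
       (\<forall>\<phi>\<in>Delta2 la mu (2*j+1). \<forall>v\<in>Vsp. \<phi> v = vzero))
    \<and> ((\<not> (\<exists>k::int. 2 * mu = of_int k)) \<or> ((\<exists>k::int. mu = of_int k) \<and> la \<noteq> -1) \<longrightarrow>
       (la \<noteq> 1 \<longrightarrow> (\<forall>\<phi>\<in>Delta2 la mu (2*j+1). \<forall>v\<in>Vsp. \<phi> v = vzero))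
     \<and> (la = 1 \<longrightarrow> (\<forall>\<phi>. is_linear \<phi> \<longrightarrow>
          (\<phi> \<in> Delta2 1 mu (2*j+1) \<longleftrightarrow>
            (\<exists>\<alpha>::complex. (\<forall>n. \<phi> (e (GL n)) = vsmul \<alpha> (e (GY (n + j)))
                              \<and> \<phi> (e (GY n)) = vsmul \<alpha> (e (GM (n + j + 1)))
                              \<and> \<phi> (e (GM n)) = vzero)
                         \<and> \<phi> (e GC) = vzero)))))"
proof (intro conjI impI ballI allI iffI)
  fix \<phi> v
  assume h: "(\<exists>k::int. mu = of_int k + 1/2) \<and> la \<notin> {-3, -1, 1}" and P: "\<phi> \<in> Delta2 la mu (2*j+1)"
    and v: "v \<in> Vsp"
  have H: "\<not> (la = -3 \<and> mu = - of_int k - 1/2)" for k::int using h by auto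
  have "la \<noteq> 1" using h by auto
  thus "\<phi> v = vzero" using forward_zero[OF P H] v by blast
next
  fix \<phi> v
  assume h: "(\<not> (\<exists>k::int. 2 * mu = of_int k)) \<or> ((\<exists>k::int. mu = of_int k) \<and> la \<noteq> -1)"
    and l1: "la \<noteq> 1" and P: "\<phi> \<in> Delta2 la mu (2*j+1)" and v: "v \<in> Vsp"
  show "\<phi> v = vzero" using forward_zero[OF P H2[OF h] l1] v by blast
next
  fix \<phi>
  assume "la = 1" and P: "\<phi> \<in> Delta2 1 mu (2*j+1)"
  have H: "\<not> ((1::complex) = -3 \<and> mu = - of_int k - 1/2)" for k::int by simp
  show "\<exists>\<alpha>::complex. (\<forall>n. \<phi> (e (GL n)) = vsmul \<alpha> (e (GY (n + j)))
                              \<and> \<phi> (e (GY n)) = vsmul \<alpha> (e (GM (n + j + 1)))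
                              \<and> \<phi> (e (GM n)) = vzero)
                         \<and> \<phi> (e GC) = vzero"
    using forward[OF P H] by blast
next
  fix \<phi>
  assume lin: "is_linear \<phi>" and ex: "\<exists>\<alpha>::complex. (\<forall>n. \<phi> (e (GL n)) = vsmul \<alpha> (e (GY (n + j)))
                              \<and> \<phi> (e (GY n)) = vsmul \<alpha> (e (GM (n + j + 1)))
                              \<and> \<phi> (e (GM n)) = vzero)
                         \<and> \<phi> (e GC) = vzero"
  then obtain \<alpha> where S: "\<forall>n. \<phi> (e (GL n)) = vsmul \<alpha> (e (GY (n + j)))
                              \<and> \<phi> (e (GY n)) = vsmul \<alpha> (e (GM (n + j + 1)))
                              \<and> \<phi> (e (GM n)) = vzero" "\<phi> (e GC) = vzero" by blast
  show "\<phi> \<in> Delta2 1 mu (2*j+1)" by (rule backward[OF lin S])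
qed

end
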